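(* Let $p:\mathbb{R}^n\to\mathbb{R}$ be a nonzero polynomial of the form $$p(x)=\sum_{l\le |\alpha|\le k} c_\alpha x^\alpha,$$ where $l\ge 1$ is the lowest degree and $k\ge l$ the highest degree of $p$, i.e., $l$ (resp. $k$) is the smallest (resp. largest) integer such that some $\alpha\in\mathbb{N}^n$ with $|\alpha|=l$ (resp. $|\alpha|=k$) has $c_\alpha\neq 0$. Assume that $p(x)\le 0$ for all $x\in\mathbb{R}^n$. Then: \begin{enumerate} \item The degrees $l$ and $k$ are even, and both $p_l(x)=\sum_{|\alpha|=l}c_\alpha x^\alpha$ and $p_k(x)=\sum_{|\alpha|=k}c_\alpha x^\alpha$ are negative semi-definite. \item If a monomial $c_\alpha x^\alpha$ (with $c_\alpha\ne 0$) of $p$ contains a factor $x_i^{\alpha_i}$ whose degree $\alpha_i$ is the highest exponent of $x_i$ among all monomials of $p$, then $\alpha_i$ is even. \item If a monomial $x^\alpha$ appearing in $p_l$ (resp. $p_k$) contains a factor $x_i^{\alpha_i}$ whose degree $\alpha_i$ is the highest exponent of $x_i$ among all monomials of $p_l$ (resp. $p_k$), then $\alpha_i$ is even. \item If a monomial of $p$ has the form $c\,x_i^d$ (a single variable $x_i$ with coefficient $c$) and $d$ is either the lowest or the highest degree among the monomials of $p$ of this form (pure powers of $x_i$), then $d$ is even and $c\le 0$. \end{enumerate}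
   Context: Multi-index notation: for $\alpha=(\alpha_1,\dots,\alpha_n)\in\mathbb{N}^n$ (nonnegative integers), $x^\alpha=x_1^{\alpha_1}\cdots x_n^{\alpha_n}$ and $|\alpha|=\alpha_1+\dots+\alpha_n$. A monomial of $p$ means a term $c_\alpha x^\alpha$ with $c_\alpha\neq 0$. A function $V:\mathbb{R}^n\to\mathbb{R}$ is positive semi-definite if $V(0)=0$ and $V(x)\ge 0$ for all $x$; it is negative semi-definite if $-V$ is positive semi-definite. *)

theory Defs
  imports "HOL-Analysis.Analysis"
begin

text \<open>A real polynomial in n variables (n = CARD('n)) is represented by its coefficient
  function c on multi-indices alpha :: 'n \<Rightarrow> nat, with finite support.\<close>

definition mdeg :: "('n::finite \<Rightarrow> nat) \<Rightarrow> nat" where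
  "mdeg \<alpha> = (\<Sum>i\<in>UNIV. \<alpha> i)"

definition msupp :: "(('n::finite \<Rightarrow> nat) \<Rightarrow> real) \<Rightarrow> ('n \<Rightarrow> nat) set" where
  "msupp c = {\<alpha>. c \<alpha> \<noteq> 0}"

definition monom_val :: "('n::finite \<Rightarrow> nat) \<Rightarrow> real ^ 'n \<Rightarrow> real" where
  "monom_val \<alpha> x = (\<Prod>i\<in>UNIV. (x $ i) ^ (\<alpha> i))"

definition peval :: "(('n::finite \<Rightarrow> nat) \<Rightarrow> real) \<Rightarrow> real ^ 'n \<Rightarrow> real" where
  "peval c x = (\<Sum>\<alpha>\<in>msupp c. c \<alpha> * monom_val \<alpha> x)"

definition lowdeg :: "(('n::finite \<Rightarrow> nat) \<Rightarrow> real) \<Rightarrow> nat" where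
  "lowdeg c = Min (mdeg ` msupp c)"

definition highdeg :: "(('n::finite \<Rightarrow> nat) \<Rightarrow> real) \<Rightarrow> nat" where
  "highdeg c = Max (mdeg ` msupp c)"

definition hpart :: "(('n::finite \<Rightarrow> nat) \<Rightarrow> real) \<Rightarrow> nat \<Rightarrow> ('n \<Rightarrow> nat) \<Rightarrow> real" where
  "hpart c d = (\<lambda>\<alpha>. if mdeg \<alpha> = d then c \<alpha> else 0)"

definition maxexp :: "(('n::finite \<Rightarrow> nat) \<Rightarrow> real) \<Rightarrow> 'n \<Rightarrow> nat" where
  "maxexp c i = Max ((\<lambda>\<beta>. \<beta> i) ` msupp c)"

definition pure_idx :: "'n \<Rightarrow> nat \<Rightarrow> ('n \<Rightarrow> nat)" where
  "pure_idx i d = (\<lambda>j. if j = i then d else 0)"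

definition pure_degs :: "(('n::finite \<Rightarrow> nat) \<Rightarrow> real) \<Rightarrow> 'n \<Rightarrow> nat set" where
  "pure_degs c i = {d. c (pure_idx i d) \<noteq> 0}"

definition psd :: "('a::zero \<Rightarrow> real) \<Rightarrow> bool" where
  "psd V \<longleftrightarrow> V 0 = 0 \<and> (\<forall>x. V x \<ge> 0)"

definition nsd :: "('a::zero \<Rightarrow> real) \<Rightarrow> bool" where
  "nsd V \<longleftrightarrow> psd (\<lambda>x. - V x)"

end

theory Submission imports Defs "HOL-Computational_Algebra.Polynomial" begin

lemma uni_zero:
  fixes b :: "'a \<Rightarrow> real" and k :: "'a \<Rightarrow> nat"
  assumes fin: "finite A" and z: "\<forall>t. (\<Sum>\<alpha>\<in>A. b \<alpha> * t ^ k \<alpha>) = 0"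
  shows "(\<Sum>\<alpha>\<in>{\<alpha>\<in>A. k \<alpha> = e}. b \<alpha>) = 0"
proof -
  define P where "P = (\<Sum>\<alpha>\<in>A. monom (b \<alpha>) (k \<alpha>))"
  have "poly P t = (\<Sum>\<alpha>\<in>A. b \<alpha> * t ^ k \<alpha>)" for t
    by (simp add: P_def poly_sum poly_monom)
  hence "P = 0" using z poly_all_0_iff_0 by auto
  hence "coeff P e = 0" by simp
  moreover have "coeff P e = (\<Sum>\<alpha>\<in>A. if k \<alpha> = e then b \<alpha> else 0)"
    by (simp add: P_def coeff_sum)
  ultimately show ?thesis using fin by (simp add: sum.inter_filter)
qed

lemma mono_upd:
  "monom_val \<alpha> (\<chi> j. if j = i then t else x $ j) = t ^ (\<alpha> i) * monom_val \<alpha> (\<chi> j. if j = i then 1 else x $ j)"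
proof -
  have "monom_val \<alpha> (\<chi> j. if j = i then t else x $ j) = t ^ (\<alpha> i) * (\<Prod>j\<in>UNIV - {i}. (x $ j) ^ \<alpha> j)"
    unfolding monom_val_def by (subst prod.remove[of UNIV i]) (auto intro!: prod.cong)
  moreover have "monom_val \<alpha> (\<chi> j. if j = i then 1 else x $ j) = (\<Prod>j\<in>UNIV - {i}. (x $ j) ^ \<alpha> j)"
    unfolding monom_val_def by (subst prod.remove[of UNIV i]) (auto intro!: prod.cong)
  ultimately show ?thesis by simp
qed

lemma nv_gen:
  fixes S :: "'n::finite set" and a :: "('n \<Rightarrow> nat) \<Rightarrow> real"
  assumes "finite S"
  shows "finite A \<Longrightarrow> (\<forall>x. (\<forall>j. j \<notin> S \<longrightarrow> x $ j = 1) \<longrightarrow> (\<Sum>\<alpha>\<in>A. a \<alpha> * monom_val \<alpha> x) = 0)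
    \<Longrightarrow> (\<Sum>\<alpha>\<in>{\<alpha>\<in>A. \<forall>j\<in>S. \<alpha> j = \<gamma> j}. a \<alpha>) = 0"
  using assms
proof (induction S arbitrary: A \<gamma> rule: finite_induct)
  case empty
  have "monom_val \<alpha> (\<chi> j. 1) = 1" for \<alpha> :: "'n \<Rightarrow> nat" by (simp add: monom_val_def)
  with empty.prems(2) have "(\<Sum>\<alpha>\<in>A. a \<alpha>) = 0" by (metis (no_types, lifting) mult.right_neutral sum.cong vec_lambda_beta)
  thus ?case by simp
next
  case (insert i S)
  define e where "e = \<gamma> i"
  define A' where "A' = {\<alpha>\<in>A. \<alpha> i = e}"
  have fA': "finite A'" using insert.prems(1) by (simp add: A'_def)
  have H': "\<forall>x. (\<forall>j. j \<notin> S \<longrightarrow> x $ j = 1) \<longrightarrow> (\<Sum>\<alpha>\<in>A'. a \<alpha> * monom_val \<alpha> x) = 0"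
  proof (intro allI impI)
    fix x :: "real ^ 'n" assume x1: "\<forall>j. j \<notin> S \<longrightarrow> x $ j = 1"
    have xi: "x $ i = 1" using x1 insert.hyps(2) by simp
    have xeq: "(\<chi> j. if j = i then 1 else x $ j) = x" using xi by (simp add: vec_eq_iff)
    have "\<forall>t. (\<Sum>\<alpha>\<in>A. (a \<alpha> * monom_val \<alpha> x) * t ^ (\<alpha> i)) = 0"
    proof
      fix t :: real
      have "(\<Sum>\<alpha>\<in>A. a \<alpha> * monom_val \<alpha> (\<chi> j. if j = i then t else x $ j)) = 0"
        using insert.prems(2) x1 by auto
      thus "(\<Sum>\<alpha>\<in>A. (a \<alpha> * monom_val \<alpha> x) * t ^ (\<alpha> i)) = 0"
        unfolding mono_upd xeq by (simp add: ac_simps)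
    qed
    from uni_zero[OF insert.prems(1) this, of e]
    show "(\<Sum>\<alpha>\<in>A'. a \<alpha> * monom_val \<alpha> x) = 0" by (simp add: A'_def)
  qed
  have "(\<Sum>\<alpha>\<in>{\<alpha>\<in>A'. \<forall>j\<in>S. \<alpha> j = \<gamma> j}. a \<alpha>) = 0"
    using insert.IH[OF fA' H'] by simp
  moreover have "{\<alpha>\<in>A'. \<forall>j\<in>S. \<alpha> j = \<gamma> j} = {\<alpha>\<in>A. \<forall>j\<in>insert i S. \<alpha> j = \<gamma> j}"
    by (auto simp: A'_def e_def)
  ultimately show ?case by simp
qed

lemma nonvanish:
  fixes c :: "('n::finite \<Rightarrow> nat) \<Rightarrow> real"
  assumes "finite (msupp c)" "msupp c \<noteq> {}"
  shows "\<exists>x. peval c x \<noteq> 0"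
proof (rule ccontr)
  assume "\<not> ?thesis"
  hence z: "\<forall>x. (\<Sum>\<alpha>\<in>msupp c. c \<alpha> * monom_val \<alpha> x) = 0" by (simp add: peval_def)
  obtain \<gamma> where g: "\<gamma> \<in> msupp c" using assms(2) by blast
  have "(\<Sum>\<alpha>\<in>{\<alpha>\<in>msupp c. \<forall>j\<in>UNIV. \<alpha> j = \<gamma> j}. c \<alpha>) = 0"
    by (rule nv_gen[OF finite assms(1)]) (use z in auto)
  moreover have "{\<alpha>\<in>msupp c. \<forall>j\<in>UNIV. \<alpha> j = \<gamma> j} = {\<gamma>}" using g by (auto simp: fun_eq_iff)
  ultimately show False using g by (simp add: msupp_def)
qed


lemma core:
  fixes h :: "real \<Rightarrow> real"
  assumes cont: "isCont h 0" and sg: "\<forall>s. s \<noteq> 0 \<longrightarrow> h s * s ^ m \<le> 0"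
  shows "h 0 \<le> 0 \<and> (h 0 \<noteq> 0 \<longrightarrow> even m)"
proof -
  have near: "\<exists>d>0. \<forall>s. \<bar>s\<bar> < d \<longrightarrow> (h 0 > 0 \<longrightarrow> h s > 0) \<and> (h 0 < 0 \<longrightarrow> h s < 0)" if "h 0 \<noteq> 0"
  proof -
    have "\<bar>h 0\<bar> > 0" using that by simp
    with cont obtain d where d: "d > 0" "\<forall>s. dist s 0 < d \<longrightarrow> dist (h s) (h 0) < \<bar>h 0\<bar>"
      unfolding continuous_at_eps_delta by blast
    have "(h 0 > 0 \<longrightarrow> h s > 0) \<and> (h 0 < 0 \<longrightarrow> h s < 0)" if "\<bar>s\<bar> < d" for s
    proof -
      have "\<bar>h s - h 0\<bar> < \<bar>h 0\<bar>" using d(2) that by (simp add: dist_real_def)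
      thus ?thesis by linarith
    qed
    with d(1) show ?thesis by blast
  qed
  have A: "h 0 \<le> 0"
  proof (rule ccontr)
    assume "\<not> h 0 \<le> 0"
    hence h0: "h 0 > 0" by simp
    hence "h 0 \<noteq> 0" by simp
    from near[OF this] obtain d where d: "d > 0" "\<forall>s. \<bar>s\<bar> < d \<longrightarrow> (h 0 > 0 \<longrightarrow> h s > 0) \<and> (h 0 < 0 \<longrightarrow> h s < 0)"
      by blast
    define s where "s = d / 2"
    have s: "s > 0" "\<bar>s\<bar> < d" using d(1) by (auto simp: s_def)
    have "h s > 0" using d(2)[rule_format, OF s(2)] h0 by simp
    moreover have "s ^ m > 0" using s(1) by simp
    ultimately have "h s * s ^ m > 0" by (rule mult_pos_pos)
    moreover have "h s * s ^ m \<le> 0" using sg[rule_format, of s] s(1) by simp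
    ultimately show False by linarith
  qed
  have B: "even m" if "h 0 \<noteq> 0"
  proof (rule ccontr)
    assume odd: "\<not> even m"
    have h0: "h 0 < 0" using A that by simp
    hence "h 0 \<noteq> 0" by simp
    from near[OF this] obtain d where d: "d > 0" "\<forall>s. \<bar>s\<bar> < d \<longrightarrow> (h 0 > 0 \<longrightarrow> h s > 0) \<and> (h 0 < 0 \<longrightarrow> h s < 0)"
      by blast
    define s where "s = - d / 2"
    have s: "s < 0" "\<bar>s\<bar> < d" using d(1) by (auto simp: s_def)
    have "h s < 0" using d(2)[rule_format, OF s(2)] h0 by simp
    moreover have "s ^ m < 0" using s(1) odd by (simp add: power_less_zero_eq)
    ultimately have "h s * s ^ m > 0" by (rule mult_neg_neg)
    moreover have "h s * s ^ m \<le> 0" using sg[rule_format, of s] s(1) by simp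
    ultimately show False by linarith
  qed
  show ?thesis using A B by blast
qed

lemma low_lemma:
  fixes b :: "'a \<Rightarrow> real" and k :: "'a \<Rightarrow> nat"
  assumes fin: "finite A" and ne: "A \<noteq> {}" and np: "\<forall>t. (\<Sum>\<alpha>\<in>A. b \<alpha> * t ^ k \<alpha>) \<le> 0"
  shows "(\<Sum>\<alpha>\<in>{\<alpha>\<in>A. k \<alpha> = Min (k ` A)}. b \<alpha>) \<le> 0 \<and>
         ((\<Sum>\<alpha>\<in>{\<alpha>\<in>A. k \<alpha> = Min (k ` A)}. b \<alpha>) \<noteq> 0 \<longrightarrow> even (Min (k ` A)))"
proof -
  define m where "m = Min (k ` A)"
  have mle: "m \<le> k \<alpha>" if "\<alpha> \<in> A" for \<alpha> using fin that by (simp add: m_def)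
  define h where "h = (\<lambda>s::real. \<Sum>\<alpha>\<in>A. b \<alpha> * s ^ (k \<alpha> - m))"
  have c: "isCont h 0" unfolding h_def by (intro continuous_intros)
  have "h s * s ^ m = (\<Sum>\<alpha>\<in>A. b \<alpha> * s ^ k \<alpha>)" for s
    unfolding h_def sum_distrib_right
  proof (rule sum.cong)
    fix \<alpha> assume "\<alpha> \<in> A"
    hence "k \<alpha> - m + m = k \<alpha>" using mle by simp
    thus "b \<alpha> * s ^ (k \<alpha> - m) * s ^ m = b \<alpha> * s ^ k \<alpha>" by (metis mult.assoc power_add)
  qed simp
  hence sg: "\<forall>s. s \<noteq> 0 \<longrightarrow> h s * s ^ m \<le> 0" using np by simp
  have "h 0 = (\<Sum>\<alpha>\<in>A. if k \<alpha> = m then b \<alpha> else 0)"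
    unfolding h_def
  proof (rule sum.cong)
    fix \<alpha> assume "\<alpha> \<in> A"
    hence "m \<le> k \<alpha>" by (rule mle)
    thus "b \<alpha> * 0 ^ (k \<alpha> - m) = (if k \<alpha> = m then b \<alpha> else 0)" by (cases "k \<alpha> = m") auto
  qed simp
  hence "h 0 = (\<Sum>\<alpha>\<in>{\<alpha>\<in>A. k \<alpha> = m}. b \<alpha>)" using fin by (simp add: sum.inter_filter)
  with core[OF c sg] show ?thesis by (simp add: m_def)
qed

lemma high_lemma:
  fixes b :: "'a \<Rightarrow> real" and k :: "'a \<Rightarrow> nat"
  assumes fin: "finite A" and ne: "A \<noteq> {}" and np: "\<forall>t. (\<Sum>\<alpha>\<in>A. b \<alpha> * t ^ k \<alpha>) \<le> 0"
  shows "(\<Sum>\<alpha>\<in>{\<alpha>\<in>A. k \<alpha> = Max (k ` A)}. b \<alpha>) \<le> 0 \<and>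
         ((\<Sum>\<alpha>\<in>{\<alpha>\<in>A. k \<alpha> = Max (k ` A)}. b \<alpha>) \<noteq> 0 \<longrightarrow> even (Max (k ` A)))"
proof -
  define m where "m = Max (k ` A)"
  have mle: "k \<alpha> \<le> m" if "\<alpha> \<in> A" for \<alpha> using fin that by (simp add: m_def)
  define h where "h = (\<lambda>s::real. \<Sum>\<alpha>\<in>A. b \<alpha> * s ^ (m - k \<alpha>))"
  have c: "isCont h 0" unfolding h_def by (intro continuous_intros)
  have "h s * s ^ m = s ^ (2 * m) * (\<Sum>\<alpha>\<in>A. b \<alpha> * (inverse s) ^ k \<alpha>)" if s0: "s \<noteq> 0" for s
    unfolding h_def sum_distrib_right sum_distrib_left
  proof (rule sum.cong)
    fix \<alpha> assume "\<alpha> \<in> A"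
    hence le: "k \<alpha> \<le> m" using mle by simp
    have "s ^ (m - k \<alpha>) = s ^ m / s ^ k \<alpha>" using power_diff[OF s0 le] .
    moreover have "s ^ (2 * m) = s ^ m * s ^ m" by (simp add: mult_2 power_add)
    ultimately show "b \<alpha> * s ^ (m - k \<alpha>) * s ^ m = s ^ (2 * m) * (b \<alpha> * inverse s ^ k \<alpha>)"
      by (simp add: power_inverse field_simps)
  qed simp
  moreover have "s ^ (2 * m) \<ge> 0" for s :: real by (simp add: power_mult)
  ultimately have sg: "\<forall>s. s \<noteq> 0 \<longrightarrow> h s * s ^ m \<le> 0" using np
    by (metis mult_nonneg_nonpos)
  have "h 0 = (\<Sum>\<alpha>\<in>A. if k \<alpha> = m then b \<alpha> else 0)"
    unfolding h_def
  proof (rule sum.cong)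
    fix \<alpha> assume "\<alpha> \<in> A"
    hence "k \<alpha> \<le> m" by (rule mle)
    thus "b \<alpha> * 0 ^ (m - k \<alpha>) = (if k \<alpha> = m then b \<alpha> else 0)" by (cases "k \<alpha> = m") auto
  qed simp
  hence "h 0 = (\<Sum>\<alpha>\<in>{\<alpha>\<in>A. k \<alpha> = m}. b \<alpha>)" using fin by (simp add: sum.inter_filter)
  with core[OF c sg] show ?thesis by (simp add: m_def)
qed


lemma mono_scale: "monom_val \<alpha> (t *\<^sub>R x) = t ^ mdeg \<alpha> * monom_val \<alpha> x"
  unfolding monom_val_def mdeg_def power_sum
  by (simp add: power_mult_distrib prod.distrib)

lemma mono_zero: "mdeg \<alpha> \<ge> 1 \<Longrightarrow> monom_val \<alpha> (0 :: real ^ 'n::finite) = 0"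
proof -
  assume "mdeg \<alpha> \<ge> 1"
  then obtain j where "\<alpha> j \<noteq> 0" unfolding mdeg_def by (metis (mono_tags) not_one_le_zero sum.neutral)
  thus ?thesis unfolding monom_val_def by (intro prod_zero) auto
qed

lemma peval_scale: "peval c (t *\<^sub>R x) = (\<Sum>\<alpha>\<in>msupp c. (c \<alpha> * monom_val \<alpha> x) * t ^ mdeg \<alpha>)"
  unfolding peval_def mono_scale by (simp add: ac_simps)

lemma msupp_hpart: "msupp (hpart c d) = {\<alpha>\<in>msupp c. mdeg \<alpha> = d}"
  by (auto simp: msupp_def hpart_def)

lemma peval_hpart: "peval (hpart c d) x = (\<Sum>\<alpha>\<in>{\<alpha>\<in>msupp c. mdeg \<alpha> = d}. c \<alpha> * monom_val \<alpha> x)"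
  unfolding peval_def msupp_hpart by (rule sum.cong) (auto simp: hpart_def)

lemma part2:
  fixes c :: "('n::finite \<Rightarrow> nat) \<Rightarrow> real"
  assumes fin: "finite (msupp c)" and np: "\<forall>x. peval c x \<le> 0"
    and a: "\<alpha> \<in> msupp c" and ai: "\<alpha> i = maxexp c i"
  shows "even (\<alpha> i)"
proof -
  define m where "m = maxexp c i"
  define c' where "c' = (\<lambda>\<beta>. if \<beta> i = m then c \<beta> else 0)"
  have sc': "msupp c' = {\<beta>\<in>msupp c. \<beta> i = m}" by (auto simp: msupp_def c'_def)
  have ne: "msupp c' \<noteq> {}" using a ai by (auto simp: sc' m_def)
  have fc: "finite (msupp c')" using fin by (simp add: sc')
  from nonvanish[OF fc ne] obtain z where z: "peval c' z \<noteq> 0" by blast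
  define x1 where "x1 = (\<chi> j. if j = i then 1 else z $ j)"
  have zeq: "(\<chi> j. if j = i then z $ i else z $ j) = z" by (simp add: vec_eq_iff)
  have "peval c' z = (\<Sum>\<beta>\<in>{\<beta>\<in>msupp c. \<beta> i = m}. c \<beta> * ((z $ i) ^ m * monom_val \<beta> x1))"
    unfolding peval_def sc'
  proof (rule sum.cong)
    fix \<beta> assume "\<beta> \<in> {\<beta>\<in>msupp c. \<beta> i = m}"
    thus "c' \<beta> * monom_val \<beta> z = c \<beta> * ((z $ i) ^ m * monom_val \<beta> x1)"
      using mono_upd[of \<beta> i "z $ i" z] by (simp add: zeq x1_def c'_def)
  qed simp
  also have "\<dots> = (z $ i) ^ m * (\<Sum>\<beta>\<in>{\<beta>\<in>msupp c. \<beta> i = m}. c \<beta> * monom_val \<beta> x1)"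
    by (simp add: sum_distrib_left ac_simps)
  finally have "peval c' z = (z $ i) ^ m * (\<Sum>\<beta>\<in>{\<beta>\<in>msupp c. \<beta> i = m}. c \<beta> * monom_val \<beta> x1)" .
  hence nz: "(\<Sum>\<beta>\<in>{\<beta>\<in>msupp c. \<beta> i = m}. c \<beta> * monom_val \<beta> x1) \<noteq> 0" using z by (metis mult_zero_right)
  have allt: "\<forall>t. (\<Sum>\<beta>\<in>msupp c. (c \<beta> * monom_val \<beta> x1) * t ^ (\<beta> i)) \<le> 0"
  proof
    fix t :: real
    have "peval c (\<chi> j. if j = i then t else z $ j) \<le> 0" using np[rule_format] .
    moreover have "peval c (\<chi> j. if j = i then t else z $ j) = (\<Sum>\<beta>\<in>msupp c. (c \<beta> * monom_val \<beta> x1) * t ^ (\<beta> i))"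
      unfolding peval_def mono_upd x1_def[symmetric] by (rule sum.cong[OF refl]) (simp add: mult_ac)
    ultimately show "(\<Sum>\<beta>\<in>msupp c. (c \<beta> * monom_val \<beta> x1) * t ^ (\<beta> i)) \<le> 0" by simp
  qed
  have "msupp c \<noteq> {}" using a by blast
  from high_lemma[OF fin this allt, THEN conjunct2]
  have "(\<Sum>\<beta>\<in>{\<beta>\<in>msupp c. \<beta> i = Max ((\<lambda>\<beta>. \<beta> i) ` msupp c)}. c \<beta> * monom_val \<beta> x1) \<noteq> 0
     \<longrightarrow> even (Max ((\<lambda>\<beta>. \<beta> i) ` msupp c))" .
  moreover have "Max ((\<lambda>\<beta>. \<beta> i) ` msupp c) = m" by (simp add: m_def maxexp_def)
  ultimately show ?thesis using nz ai m_def by simp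
qed


lemma part4:
  fixes c :: "('n::finite \<Rightarrow> nat) \<Rightarrow> real"
  assumes fin: "finite (msupp c)" and np: "\<forall>x. peval c x \<le> 0"
    and d: "d \<in> pure_degs c i" and dm: "d = Min (pure_degs c i) \<or> d = Max (pure_degs c i)"
  shows "even d \<and> c (pure_idx i d) \<le> 0"
proof -
  define A where "A = {\<alpha>\<in>msupp c. \<forall>j. j \<noteq> i \<longrightarrow> \<alpha> j = 0}"
  have fA: "finite A" using fin by (simp add: A_def)
  have pidx: "\<alpha> = pure_idx i (\<alpha> i)" if "\<forall>j. j \<noteq> i \<longrightarrow> \<alpha> j = 0" for \<alpha> :: "'n \<Rightarrow> nat"
    using that by (auto simp: pure_idx_def fun_eq_iff)
  have img: "(\<lambda>\<alpha>. \<alpha> i) ` A = pure_degs c i"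
  proof
    show "(\<lambda>\<alpha>. \<alpha> i) ` A \<subseteq> pure_degs c i"
    proof
      fix e assume "e \<in> (\<lambda>\<alpha>. \<alpha> i) ` A"
      then obtain \<alpha> where al: "\<alpha> \<in> A" "e = \<alpha> i" by blast
      hence "\<alpha> = pure_idx i e" using pidx A_def by blast
      thus "e \<in> pure_degs c i" using al by (simp add: A_def pure_degs_def msupp_def)
    qed
    show "pure_degs c i \<subseteq> (\<lambda>\<alpha>. \<alpha> i) ` A"
    proof
      fix e assume "e \<in> pure_degs c i"
      hence "pure_idx i e \<in> A" by (simp add: A_def pure_degs_def msupp_def pure_idx_def)
      moreover have "pure_idx i e i = e" by (simp add: pure_idx_def)
      ultimately show "e \<in> (\<lambda>\<alpha>. \<alpha> i) ` A" by (metis image_eqI)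
    qed
  qed
  have fib: "{\<alpha>\<in>A. \<alpha> i = d} = {pure_idx i d}"
  proof
    show "{\<alpha>\<in>A. \<alpha> i = d} \<subseteq> {pure_idx i d}" using pidx by (auto simp: A_def)
    show "{pure_idx i d} \<subseteq> {\<alpha>\<in>A. \<alpha> i = d}" using d
      by (simp add: A_def pure_degs_def msupp_def pure_idx_def)
  qed
  have neA: "A \<noteq> {}" using fib by blast
  have one: "monom_val \<alpha> (\<chi> j. if j = i then 1 else (0::real ^ 'n) $ j) = 1" if "\<forall>j. j \<noteq> i \<longrightarrow> \<alpha> j = 0" for \<alpha>
    unfolding monom_val_def by (rule prod.neutral) (use that in auto)
  have zer: "monom_val \<alpha> (\<chi> j. if j = i then t else (0::real ^ 'n) $ j) = 0" if "\<not> (\<forall>j. j \<noteq> i \<longrightarrow> \<alpha> j = 0)" for \<alpha> t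
  proof -
    from that obtain j where "j \<noteq> i" "\<alpha> j \<noteq> 0" by blast
    thus ?thesis unfolding monom_val_def by (intro prod_zero) (auto intro!: bexI[of _ j])
  qed
  have allt: "\<forall>t. (\<Sum>\<alpha>\<in>A. c \<alpha> * t ^ (\<alpha> i)) \<le> 0"
  proof
    fix t :: real
    have "peval c (\<chi> j. if j = i then t else (0::real ^ 'n) $ j) =
        (\<Sum>\<alpha>\<in>msupp c. if (\<forall>j. j \<noteq> i \<longrightarrow> \<alpha> j = 0) then c \<alpha> * t ^ (\<alpha> i) else 0)"
      unfolding peval_def
    proof (rule sum.cong[OF refl])
      fix \<alpha> assume "\<alpha> \<in> msupp c"
      show "c \<alpha> * monom_val \<alpha> (\<chi> j. if j = i then t else (0::real ^ 'n) $ j) =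
          (if (\<forall>j. j \<noteq> i \<longrightarrow> \<alpha> j = 0) then c \<alpha> * t ^ (\<alpha> i) else 0)"
      proof (cases "\<forall>j. j \<noteq> i \<longrightarrow> \<alpha> j = 0")
        case True
        then show ?thesis using one[OF True] mono_upd[of \<alpha> i t "0::real^'n"] by simp
      next
        case False
        then show ?thesis using zer[OF False, of t] by (simp only: if_not_P[OF False] mult_zero_right if_False)
      qed
    qed
    also have "\<dots> = (\<Sum>\<alpha>\<in>A. c \<alpha> * t ^ (\<alpha> i))"
      unfolding A_def using fin by (simp add: sum.inter_filter)
    finally show "(\<Sum>\<alpha>\<in>A. c \<alpha> * t ^ (\<alpha> i)) \<le> 0" using np by metis
  qed
  have cd: "c (pure_idx i d) \<noteq> 0" using d by (simp add: pure_degs_def)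
  from dm show ?thesis
  proof
    assume dmin: "d = Min (pure_degs c i)"
    from low_lemma[OF fA neA allt] show ?thesis unfolding img dmin[symmetric] fib using cd by simp
  next
    assume dmax: "d = Max (pure_degs c i)"
    from high_lemma[OF fA neA allt] show ?thesis unfolding img dmax[symmetric] fib using cd by simp
  qed
qed

theorem proposition1:
  fixes c :: "('n::finite \<Rightarrow> nat) \<Rightarrow> real"
  assumes fin: "finite (msupp c)"
    and nonzero: "msupp c \<noteq> {}"
    and low_ge1: "lowdeg c \<ge> 1"
    and nonpos: "\<forall>x. peval c x \<le> 0"
  shows "even (lowdeg c) \<and> even (highdeg c)
         \<and> nsd (peval (hpart c (lowdeg c))) \<and> nsd (peval (hpart c (highdeg c)))
    \<and> (\<forall>\<alpha>\<in>msupp c. \<forall>i. \<alpha> i = maxexp c i \<longrightarrow> even (\<alpha> i))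
    \<and> (\<forall>\<alpha>\<in>msupp (hpart c (lowdeg c)). \<forall>i.
           \<alpha> i = maxexp (hpart c (lowdeg c)) i \<longrightarrow> even (\<alpha> i))
    \<and> (\<forall>\<alpha>\<in>msupp (hpart c (highdeg c)). \<forall>i.
           \<alpha> i = maxexp (hpart c (highdeg c)) i \<longrightarrow> even (\<alpha> i))
    \<and> (\<forall>i. \<forall>d\<in>pure_degs c i.
           (d = Min (pure_degs c i) \<or> d = Max (pure_degs c i))
           \<longrightarrow> even d \<and> c (pure_idx i d) \<le> 0)"
proof -
  define l where "l = lowdeg c"
  define k where "k = highdeg c"
  have lM: "Min (mdeg ` msupp c) = l" by (simp add: l_def lowdeg_def)
  have kM: "Max (mdeg ` msupp c) = k" by (simp add: k_def highdeg_def)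
  have finh: "finite (msupp (hpart c d))" for d using fin by (simp add: msupp_hpart)
  have allt: "\<forall>t. (\<Sum>\<alpha>\<in>msupp c. (c \<alpha> * monom_val \<alpha> x) * t ^ mdeg \<alpha>) \<le> 0" for x
    using nonpos by (metis peval_scale)
  have Lx: "peval (hpart c l) x \<le> 0 \<and> (peval (hpart c l) x \<noteq> 0 \<longrightarrow> even l)" for x
    using low_lemma[OF fin nonzero allt[of x]] unfolding lM peval_hpart .
  have Kx: "peval (hpart c k) x \<le> 0 \<and> (peval (hpart c k) x \<noteq> 0 \<longrightarrow> even k)" for x
    using high_lemma[OF fin nonzero allt[of x]] unfolding kM peval_hpart .
  have lin: "l \<in> mdeg ` msupp c" unfolding lM[symmetric] using fin nonzero by simp
  have kin: "k \<in> mdeg ` msupp c" unfolding kM[symmetric] using fin nonzero by simp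
  have nel: "msupp (hpart c l) \<noteq> {}" using lin by (auto simp: msupp_hpart)
  have nek: "msupp (hpart c k) \<noteq> {}" using kin by (auto simp: msupp_hpart)
  have el: "even l" using nonvanish[OF finh nel] Lx by blast
  have ek: "even k" using nonvanish[OF finh nek] Kx by blast
  have l1: "l \<ge> 1" using low_ge1 by (simp add: l_def)
  have kl: "l \<le> k" using lin fin unfolding kM[symmetric] by simp
  have z0: "peval (hpart c d) 0 = 0" if "d \<ge> 1" for d
    unfolding peval_hpart by (rule sum.neutral) (use that mono_zero in auto)
  have nsdl: "nsd (peval (hpart c l))" unfolding nsd_def psd_def using z0[OF l1] Lx by simp
  have nsdk: "nsd (peval (hpart c k))" unfolding nsd_def psd_def using z0[of k] l1 kl Kx by simp
  have p2: "\<forall>\<alpha>\<in>msupp c. \<forall>i. \<alpha> i = maxexp c i \<longrightarrow> even (\<alpha> i)"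
    using part2[OF fin nonpos] by blast
  have p3l: "\<forall>\<alpha>\<in>msupp (hpart c l). \<forall>i. \<alpha> i = maxexp (hpart c l) i \<longrightarrow> even (\<alpha> i)"
    using part2[OF finh, of l] Lx by blast
  have p3k: "\<forall>\<alpha>\<in>msupp (hpart c k). \<forall>i. \<alpha> i = maxexp (hpart c k) i \<longrightarrow> even (\<alpha> i)"
    using part2[OF finh, of k] Kx by blast
  have p4: "\<forall>i. \<forall>d\<in>pure_degs c i.
           (d = Min (pure_degs c i) \<or> d = Max (pure_degs c i))
           \<longrightarrow> even d \<and> c (pure_idx i d) \<le> 0"
    using part4[OF fin nonpos] by blast
  show ?thesis using el ek nsdl nsdk p2 p3l p3k p4 unfolding l_def k_def by blast
qed

end
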